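(* Under the standing setup, assume that $f$ is bounded, i.e. $\sup_{q\in\mathcal P}\|f_q\|_\infty<\infty$. Let $u_0\in\mathbb R^d$ and $u(t):=\mathscr S(t)u_0$ for $t\ge0$. Then $u\in C^1([0,\infty);\mathbb R^d)$ is the unique classical solution of $u'(t)=\mathcal Qu(t)$ for $t\ge0$ with $u(0)=u_0$.
   Context: Standing setup: $d\in\mathbb N$; vectors in $\mathbb R^d$ with $\|u\|_\infty=\max_i|u_i|$; inequalities and suprema of vectors are componentwise; reals are identified with constant vectors. A $Q$-matrix is $q\in\mathbb R^{d\times d}$ with $q_{ii}\le0$, $q_{ij}\ge0$ ($i\ne j$), $\sum_jq_{ij}=0$. Let $\mathcal P$ be a set of $Q$-matrices and $f=(f_q)_{q\in\mathcal P}\subset\mathbb R^d$ with $\sup_{q\in\mathcal P}f_q=f_{q_0}=0$ for some $q_0\in\mathcal P$, such that $\mathcal Qu:=\sup_{q\in\mathcal P}(qu+f_q)$ is finite for every $u\in\mathbb R^d$. For $q\in\mathcal P$, $t\ge0$: $S_q(t)u_0:=e^{tq}u_0+\int_0^te^{sq}f_q\,ds$. For $h\ge0$: $\mathcal E_hu_0:=\sup_{q\in\mathcal P}S_q(h)u_0$. $P$ is the set of finite subsets $\pi\subset[0,\infty)$ with $0\in\pi$; $P_t:=\{\pi\in P:\max\pi=t\}$. For $\pi=\{t_0,\dots,t_m\}$ with $0=t_0<\dots<t_m$, $m\ge1$, $\mathcal E_\pi:=\mathcal E_{t_1-t_0}\circ\cdots\circ\mathcal E_{t_m-t_{m-1}}$,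 and $\mathcal E_{\{0\}}:=\mathcal E_0$. The Nisio semigroup of $(\mathcal P,f)$ is $\mathscr S(t)u_0:=\sup_{\pi\in P_t}\mathcal E_\pi u_0$. *)

theory Defs
  imports "HOL-Analysis.Analysis"
begin

text \<open>Dimension d is the finite index type 'n; vectors are real^'n, matrices real^'n^'n.
  Suprema of vectors are taken componentwise.\<close>

definition Q_matrix :: "real^'n^'n \<Rightarrow> bool" where
  "Q_matrix q \<longleftrightarrow> (\<forall>i. q$i$i \<le> 0) \<and> (\<forall>i j. i \<noteq> j \<longrightarrow> q$i$j \<ge> 0)
      \<and> (\<forall>i. (\<Sum>j\<in>UNIV. q$i$j) = 0)"

primrec mpow :: "real^'n^'n \<Rightarrow> nat \<Rightarrow> real^'n^'n" where
  "mpow q 0 = mat 1"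
| "mpow q (Suc k) = q ** mpow q k"

text \<open>Matrix exponential e^A (with matrix product, not the componentwise one).\<close>
definition mexp :: "real^'n^'n \<Rightarrow> real^'n^'n" where
  "mexp A = (\<Sum>k. (1 / fact k) *\<^sub>R mpow A k)"

definition vSup :: "'a set \<Rightarrow> ('a \<Rightarrow> real^'n) \<Rightarrow> real^'n" where
  "vSup A g = (\<chi> i. (SUP a\<in>A. g a $ i))"

definition Qop :: "(real^'n^'n) set \<Rightarrow> (real^'n^'n \<Rightarrow> real^'n) \<Rightarrow> real^'n \<Rightarrow> real^'n" where
  "Qop P f u = vSup P (\<lambda>q. q *v u + f q)"

definition Sq :: "(real^'n^'n \<Rightarrow> real^'n) \<Rightarrow> real^'n^'n \<Rightarrow> real \<Rightarrow> real^'n \<Rightarrow> real^'n" where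
  "Sq f q t u0 = mexp (t *\<^sub>R q) *v u0 + integral {0..t} (\<lambda>s. mexp (s *\<^sub>R q) *v f q)"

definition Eop :: "(real^'n^'n) set \<Rightarrow> (real^'n^'n \<Rightarrow> real^'n) \<Rightarrow> real \<Rightarrow> real^'n \<Rightarrow> real^'n" where
  "Eop P f h u0 = vSup P (\<lambda>q. Sq f q h u0)"

definition partitions :: "real \<Rightarrow> real set set" where
  "partitions t = {\<pi>. finite \<pi> \<and> \<pi> \<subseteq> {0..} \<and> 0 \<in> \<pi> \<and> Max \<pi> = t}"

text \<open>For \<pi> = {t0<...<tm}: E_\<pi> = E_{t1-t0} \<circ> ... \<circ> E_{tm-t(m-1)}; E_{{0}} = E_0.\<close>
definition Epi :: "(real^'n^'n) set \<Rightarrow> (real^'n^'n \<Rightarrow> real^'n) \<Rightarrow> real set \<Rightarrow> real^'n \<Rightarrow> real^'n" where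
  "Epi P f \<pi> = (if \<pi> = {0} then Eop P f 0 else
     (let ts = sorted_list_of_set \<pi>;
          hs = map (\<lambda>k. ts!(Suc k) - ts!k) [0..<length ts - 1]
      in foldr (\<lambda>h g. Eop P f h \<circ> g) hs id))"

definition nisio :: "(real^'n^'n) set \<Rightarrow> (real^'n^'n \<Rightarrow> real^'n) \<Rightarrow> real \<Rightarrow> real^'n \<Rightarrow> real^'n" where
  "nisio P f t u0 = vSup (partitions t) (\<lambda>\<pi>. Epi P f \<pi> u0)"

definition classical_solution ::
  "(real^'n^'n) set \<Rightarrow> (real^'n^'n \<Rightarrow> real^'n) \<Rightarrow> real^'n \<Rightarrow> (real \<Rightarrow> real^'n) \<Rightarrow> bool" where
  "classical_solution P f u0 v \<longleftrightarrow>
     (\<exists>v'. continuous_on {0..} v' \<and>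
        (\<forall>t\<ge>0. (v has_vector_derivative v' t) (at t within {0..}) \<and> v' t = Qop P f (v t)))
     \<and> v 0 = u0"

end

theory Submission
  imports Defs
begin


definition nrm :: "real^'n^'n \<Rightarrow> real" where "nrm A = (\<Sum>i\<in>UNIV. \<Sum>j\<in>UNIV. \<bar>A$i$j\<bar>)"

lemma nrm_nonneg: "0 \<le> nrm A" unfolding nrm_def by (intro sum_nonneg) auto

lemma nrm_row: "(\<Sum>j\<in>UNIV. \<bar>A$i$j\<bar>) \<le> nrm A"
  unfolding nrm_def by (rule member_le_sum) (auto intro: sum_nonneg)

lemma mpow_bound: "\<bar>mpow A k $ i $ j\<bar> \<le> nrm A ^ k"
proof (induct k arbitrary: i j)
  case 0 then show ?case by (simp add: mat_def)
next
  case (Suc k)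
  have "\<bar>mpow A (Suc k) $ i $ j\<bar> = \<bar>\<Sum>l\<in>UNIV. A$i$l * mpow A k $ l $ j\<bar>"
    by (simp add: matrix_matrix_mult_def)
  also have "\<dots> \<le> (\<Sum>l\<in>UNIV. \<bar>A$i$l\<bar> * nrm A ^ k)"
    by (rule order_trans[OF sum_abs]) (auto intro!: sum_mono mult_left_mono simp: abs_mult Suc)
  also have "\<dots> = (\<Sum>l\<in>UNIV. \<bar>A$i$l\<bar>) * nrm A ^ k" by (simp add: sum_distrib_right)
  also have "\<dots> \<le> nrm A * nrm A ^ k"
    by (rule mult_right_mono[OF nrm_row]) (simp add: nrm_nonneg)
  finally show ?case by simp
qed

lemma mpow_scale: "mpow (t *\<^sub>R A) k = t^k *\<^sub>R mpow A k"
  by (induct k) (auto simp: matrix_matrix_mult_def vec_eq_iff sum_distrib_left mult_ac)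

lemma norm_mat_le: "norm (M::real^'n^'n) \<le> (\<Sum>i\<in>UNIV. \<Sum>j\<in>UNIV. \<bar>M$i$j\<bar>)"
proof -
  have "norm M \<le> (\<Sum>i\<in>UNIV. norm (M$i))" unfolding norm_vec_def by (rule L2_set_le_sum) auto
  also have "\<dots> \<le> (\<Sum>i\<in>UNIV. \<Sum>j\<in>UNIV. \<bar>M$i$j\<bar>)" by (intro sum_mono norm_le_l1_cart)
  finally show ?thesis .
qed

lemma mexp_summable: fixes A :: "real^'n^'n" shows "summable (\<lambda>k. (1 / fact k) *\<^sub>R mpow A k)"
proof (rule summable_comparison_test')
  show "summable (\<lambda>n. of_nat (CARD('n) * CARD('n)) * (inverse (fact n) * nrm A ^ n))"
    by (intro summable_mult summable_exp)
  fix n :: nat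
  have "norm ((1 / fact n) *\<^sub>R mpow A n) = (1 / fact n) * norm (mpow A n)" by simp
  also have "\<dots> \<le> (1 / fact n) * (\<Sum>i\<in>(UNIV::'n set). \<Sum>j\<in>(UNIV::'n set). nrm A ^ n)"
    by (intro mult_left_mono order_trans[OF norm_mat_le] sum_mono mpow_bound) auto
  also have "\<dots> = of_nat (CARD('n) * CARD('n)) * (inverse (fact n) * nrm A ^ n)"
    by (simp add: field_simps)
  finally show "norm ((1 / fact n) *\<^sub>R mpow A n) \<le> of_nat (CARD('n) * CARD('n)) * (inverse (fact n) * nrm A ^ n)" .
qed

lemma mexp_entry: "mexp A $ i $ j = (\<Sum>k. (1/fact k) * (mpow A k $ i $ j))"
proof -
  have "(\<lambda>k. (1/fact k) *\<^sub>R mpow A k) sums mexp A"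
    unfolding mexp_def by (rule summable_sums[OF mexp_summable])
  from bounded_linear.sums[OF bounded_linear_vec_nth this, of i]
  have "(\<lambda>k. ((1/fact k) *\<^sub>R mpow A k) $ i) sums (mexp A $ i)" .
  from bounded_linear.sums[OF bounded_linear_vec_nth this, of j]
  have "(\<lambda>k. (1/fact k) * (mpow A k $ i $ j)) sums (mexp A $ i $ j)" by simp
  then show ?thesis by (rule sums_unique)
qed


lemma mv_bound: "\<bar>(mpow A k *v w) $ i\<bar> \<le> nrm A ^ k * (\<Sum>j\<in>UNIV. \<bar>w$j\<bar>)"
proof -
  have "\<bar>(mpow A k *v w) $ i\<bar> = \<bar>\<Sum>j\<in>UNIV. mpow A k $ i $ j * w $ j\<bar>"
    by (simp add: matrix_vector_mult_def)
  also have "\<dots> \<le> (\<Sum>j\<in>UNIV. nrm A ^ k * \<bar>w $ j\<bar>)"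
    by (rule order_trans[OF sum_abs]) (auto intro!: sum_mono mult_right_mono simp: abs_mult mpow_bound)
  finally show ?thesis by (simp add: sum_distrib_left)
qed

lemma cser_summable: "summable (\<lambda>k. ((mpow A k *v w) $ i / fact k) * y ^ k)"
proof (rule summable_comparison_test')
  show "summable (\<lambda>k. (\<Sum>j\<in>UNIV. \<bar>w$j\<bar>) * (inverse (fact k) * (nrm A * \<bar>y\<bar>) ^ k))"
    by (intro summable_mult summable_exp)
  fix k :: nat
  have "norm (((mpow A k *v w) $ i / fact k) * y ^ k) = \<bar>(mpow A k *v w) $ i\<bar> * \<bar>y\<bar>^k / fact k"
    by (simp add: abs_mult power_abs)
  also have "\<dots> \<le> (nrm A ^ k * (\<Sum>j\<in>UNIV. \<bar>w$j\<bar>)) * \<bar>y\<bar>^k / fact k"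
    by (intro divide_right_mono mult_right_mono mv_bound) auto
  also have "\<dots> = (\<Sum>j\<in>UNIV. \<bar>w$j\<bar>) * (inverse (fact k) * (nrm A * \<bar>y\<bar>) ^ k)"
    by (simp add: field_simps power_mult_distrib)
  finally show "norm (((mpow A k *v w) $ i / fact k) * y ^ k) \<le> (\<Sum>j\<in>UNIV. \<bar>w$j\<bar>) * (inverse (fact k) * (nrm A * \<bar>y\<bar>) ^ k)" .
qed

lemma mexp_entry_summable: "summable (\<lambda>k. (1/fact k) * (mpow A k $ i $ j))"
proof -
  have "summable (\<lambda>k. ((1 / fact k) *\<^sub>R mpow A k) $ i)"
    by (rule bounded_linear.summable[OF bounded_linear_vec_nth mexp_summable])
  from bounded_linear.summable[OF bounded_linear_vec_nth this, of j] show ?thesis by simp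
qed

lemma G_comp: "(mexp (t *\<^sub>R A) *v w) $ i = (\<Sum>k. ((mpow A k *v w) $ i / fact k) * t ^ k)"
proof -
  have s: "summable (\<lambda>k. (1/fact k) * (mpow (t *\<^sub>R A) k $ i $ j) * w $ j)" for j
    by (intro summable_mult2 mexp_entry_summable)
  have "(mexp (t *\<^sub>R A) *v w) $ i = (\<Sum>j\<in>UNIV. (\<Sum>k. (1/fact k) * (mpow (t *\<^sub>R A) k $ i $ j)) * w $ j)"
    by (simp add: matrix_vector_mult_def mexp_entry)
  also have "\<dots> = (\<Sum>j\<in>UNIV. (\<Sum>k. (1/fact k) * (mpow (t *\<^sub>R A) k $ i $ j) * w $ j))"
    by (intro sum.cong refl) (rule suminf_mult2, rule mexp_entry_summable)
  also have "\<dots> = (\<Sum>k. \<Sum>j\<in>UNIV. (1/fact k) * (mpow (t *\<^sub>R A) k $ i $ j) * w $ j)"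
    by (rule suminf_sum[symmetric]) (rule s)
  also have "\<dots> = (\<Sum>k. ((mpow A k *v w) $ i / fact k) * t ^ k)"
    by (intro suminf_cong) (simp add: mpow_scale matrix_vector_mult_def sum_distrib_left sum_divide_distrib sum_distrib_right mult_ac)
  finally show ?thesis .
qed

lemma G_deriv_comp:
  "((\<lambda>t. (mexp (t *\<^sub>R A) *v w) $ i) has_real_derivative (A *v (mexp (t *\<^sub>R A) *v w)) $ i) (at t)"
proof -
  define c where "c j k = (mpow A k *v w) $ j / fact k" for j k
  have G: "(\<lambda>t. (mexp (t *\<^sub>R A) *v w) $ j) = (\<lambda>t. \<Sum>k. c j k * t ^ k)" for j
    by (rule ext) (simp add: G_comp c_def)
  have cs: "summable (\<lambda>k. c j k * y ^ k)" for j y unfolding c_def by (rule cser_summable)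
  have d: "((\<lambda>t. \<Sum>k. c i k * t ^ k) has_real_derivative (\<Sum>k. diffs (c i) k * t ^ k)) (at t)"
    by (rule termdiffs_strong_converges_everywhere) (rule cs)
  have dif: "diffs (c j) k = (A *v (mpow A k *v w)) $ j / fact k" for j k
    by (simp add: diffs_def c_def matrix_vector_mul_assoc del: of_nat_Suc)
  have "(\<Sum>k. diffs (c i) k * t ^ k) = (\<Sum>k. \<Sum>j\<in>UNIV. A $ i $ j * (c j k * t ^ k))"
    by (intro suminf_cong) (simp add: dif c_def matrix_vector_mult_def sum_distrib_left sum_divide_distrib sum_distrib_right mult_ac)
  also have "\<dots> = (\<Sum>j\<in>UNIV. \<Sum>k. A $ i $ j * (c j k * t ^ k))"
    by (rule suminf_sum) (intro summable_mult cs)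
  also have "\<dots> = (\<Sum>j\<in>UNIV. A $ i $ j * (\<Sum>k. c j k * t ^ k))"
    by (intro sum.cong refl suminf_mult cs)
  also have "\<dots> = (\<Sum>j\<in>UNIV. A$i$j * (mexp (t *\<^sub>R A) *v w)$j)"
    by (simp add: G_comp c_def)
  also have "\<dots> = (A *v (mexp (t *\<^sub>R A) *v w)) $ i"
    by (simp add: matrix_vector_mult_def)
  finally show ?thesis using d G[of i] by simp
qed

lemma vec_expand: "(x::real^'n) = (\<Sum>i\<in>UNIV. (x $ i) *\<^sub>R axis i 1)"
  using basis_expansion[of x] by (simp add: scalar_mult_eq_scaleR)

lemma vec_deriv_componentwise:
  fixes g :: "real \<Rightarrow> real^'n"
  assumes "\<And>i. ((\<lambda>t. g t $ i) has_real_derivative g' $ i) (at t within S)"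
  shows "(g has_vector_derivative g') (at t within S)"
proof -
  define h :: "real \<Rightarrow> real^'n" where "h = (\<lambda>t. \<Sum>i\<in>UNIV. (g t $ i) *\<^sub>R axis i 1)"
  define h' :: "real^'n" where "h' = (\<Sum>i\<in>UNIV. (g' $ i) *\<^sub>R axis i 1)"
  have "((\<lambda>t. (g t $ i) *\<^sub>R axis i 1) has_vector_derivative (g' $ i) *\<^sub>R axis i 1) (at t within S)" for i
    using has_vector_derivative_scaleR[OF assms[of i] has_vector_derivative_const[of "axis i 1"]] by simp
  then have X: "(h has_vector_derivative h') (at t within S)"
    unfolding h_def h'_def by (intro has_vector_derivative_sum)
  have "h = g" unfolding h_def by (rule ext, rule vec_expand[symmetric])
  moreover have "h' = g'" unfolding h'_def by (rule vec_expand[symmetric])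
  ultimately show ?thesis using X by simp
qed

lemma G_deriv:
  "((\<lambda>t. mexp (t *\<^sub>R A) *v w) has_vector_derivative (A *v (mexp (t *\<^sub>R A) *v w))) (at t within S)"
  by (rule vec_deriv_componentwise, rule has_field_derivative_at_within, rule G_deriv_comp)

lemma G_zero: "mexp (0 *\<^sub>R A) *v w = w"
proof -
  have "(mexp (0 *\<^sub>R A) *v w) $ i = w $ i" for i
  proof -
    have "(\<Sum>k. ((mpow A k *v w) $ i / fact k) * (0::real) ^ k) = (mpow A 0 *v w) $ i / fact 0"
      by (rule powser_zero)
    then show ?thesis using G_comp[of 0 A w i] by simp
  qed
  then show ?thesis by (simp add: vec_eq_iff)
qed

lemma within_extend:
  assumes "(g has_vector_derivative D) (at t within {0..b})" "0 \<le> t" "t < b"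
  shows "(g has_vector_derivative D) (at t within {0..})"
proof -
  have "at t within {0..b} = at t within {0..}"
    by (rule at_within_nhd[where S="{..<b}"]) (use assms in auto)
  then show ?thesis using assms(1) by simp
qed

lemma G_cont: "continuous_on S (\<lambda>s. mexp (s *\<^sub>R A) *v w)"
  by (rule continuous_at_imp_continuous_on, rule ballI, rule has_vector_derivative_continuous, rule G_deriv)

lemma G_integral_eq:
  assumes "0 \<le> t"
  shows "mexp (t *\<^sub>R A) *v w = w + A *v integral {0..t} (\<lambda>s. mexp (s *\<^sub>R A) *v w)"
proof -
  let ?g = "\<lambda>s. mexp (s *\<^sub>R A) *v w"
  have "((\<lambda>s. A *v ?g s) has_integral (?g t - ?g 0)) {0..t}"
    by (rule fundamental_theorem_of_calculus) (use assms G_deriv in auto)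
  then have "integral {0..t} ((\<lambda>x. A *v x) \<circ> ?g) = ?g t - ?g 0"
    by (simp add: o_def integral_unique)
  moreover have "integral {0..t} ((\<lambda>x. A *v x) \<circ> ?g) = A *v integral {0..t} ?g"
    by (rule integral_linear) (auto intro: integrable_continuous_interval G_cont)
  ultimately show ?thesis using G_zero[of A w] by simp
qed

lemma Sq_deriv:
  assumes "0 \<le> t"
  shows "((\<lambda>t. Sq f q t w) has_vector_derivative (q *v Sq f q t w + f q)) (at t within {0..})"
proof -
  let ?g = "\<lambda>s. mexp (s *\<^sub>R q) *v f q"
  have "((\<lambda>u. integral {0..u} ?g) has_vector_derivative ?g t) (at t within {0..t+1})"
    by (rule integral_has_vector_derivative) (auto intro: G_cont assms)
  then have I: "((\<lambda>u. integral {0..u} ?g) has_vector_derivative ?g t) (at t within {0..})"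
    by (rule within_extend) (use assms in auto)
  have "((\<lambda>t. Sq f q t w) has_vector_derivative (q *v (mexp (t *\<^sub>R q) *v w) + ?g t)) (at t within {0..})"
    unfolding Sq_def by (intro has_vector_derivative_add G_deriv I)
  also have "q *v (mexp (t *\<^sub>R q) *v w) + ?g t = q *v Sq f q t w + f q"
    using G_integral_eq[OF assms, of q "f q"] by (simp add: Sq_def algebra_simps)
  finally show ?thesis .
qed

lemma Sq_zero: "Sq f q 0 w = w"
  using G_zero[of q w] by (simp add: Sq_def)


lemma comp_deriv:
  fixes z :: "real \<Rightarrow> real^'n"
  assumes "(z has_vector_derivative D) (at t within S)"
  shows "((\<lambda>t. z t $ i) has_real_derivative D $ i) (at t within S)"
  using bounded_linear.has_vector_derivative[OF bounded_linear_vec_nth assms, of i]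
  by (simp add: has_real_derivative_iff_has_vector_derivative)

lemma cmp:
  fixes z :: "real \<Rightarrow> real^'n"
  assumes d: "\<forall>t\<in>{0..b}. (z has_vector_derivative z' t) (at t within {0..b})"
  and c: "\<forall>t\<in>{0..b}. \<forall>i. (\<forall>j. z t $ j \<le> z t $ i) \<longrightarrow> 0 < z t $ i \<longrightarrow> z' t $ i \<le> 0"
  and z0: "\<forall>i. z 0 $ i \<le> 0"
  shows "\<forall>t\<in>{0..b}. z t $ i \<le> 0"
proof -
  have hd: "((\<lambda>t. z t $ i - e * (t + 1)) has_real_derivative (z' t $ i - e)) (at t within {0..b})"
    if "t \<in> {0..b}" for t i e
  proof -
    have "((\<lambda>t. z t $ i) has_real_derivative z' t $ i) (at t within {0..b})"
      using d that by (intro comp_deriv) auto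
    then show ?thesis by (auto intro!: derivative_eq_intros)
  qed
  have key: "\<forall>t\<in>{0..b}. \<forall>i. z t $ i < e * (t+1)" if e: "e > 0" for e
  proof (rule ccontr)
    define S where "S = (\<Union>i. {0..b} \<inter> (\<lambda>t. z t $ i - e * (t + 1)) -` {0..})"
    assume "\<not> (\<forall>t\<in>{0..b}. \<forall>i. z t $ i < e * (t+1))"
    then obtain t0 i0 where t0: "t0 \<in> {0..b}" "\<not> z t0 $ i0 < e * (t0+1)" by blast
    then have "t0 \<in> {0..b} \<inter> (\<lambda>t. z t $ i0 - e * (t + 1)) -` {0..}" by auto
    then have "t0 \<in> S" unfolding S_def by blast
    then have Sne: "S \<noteq> {}" by blast
    have "closed ({0..b} \<inter> (\<lambda>t. z t $ i - e * (t + 1)) -` {0..})" for i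
    proof (rule continuous_closed_preimage)
      show "continuous_on {0..b} (\<lambda>t. z t $ i - e * (t + 1))"
        unfolding continuous_on_eq_continuous_within
        using hd DERIV_continuous by blast
    qed auto
    then have clS: "closed S" unfolding S_def by (intro closed_UN) auto
    have bb: "bdd_below S" unfolding S_def by (rule bdd_belowI[of _ 0]) auto
    define \<tau> where "\<tau> = Inf S"
    have tS: "\<tau> \<in> S" unfolding \<tau>_def by (rule closed_contains_Inf[OF Sne bb clS])
    then obtain k where k: "\<tau> \<in> {0..b}" "z \<tau> $ k \<ge> e * (\<tau> + 1)" unfolding S_def by auto
    have below: "z s $ j < e * (s+1)" if "0 \<le> s" "s < \<tau>" for s j
    proof (rule ccontr)
      assume "\<not> z s $ j < e * (s+1)"
      then have "s \<in> {0..b} \<inter> (\<lambda>t. z t $ j - e * (t + 1)) -` {0..}" using that k by auto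
      then have "s \<in> S" unfolding S_def by blast
      then have "\<tau> \<le> s" unfolding \<tau>_def by (rule cInf_lower[OF _ bb])
      then show False using that by simp
    qed
    have tpos: "\<tau> > 0"
    proof (rule ccontr)
      assume "\<not> \<tau> > 0" then have "\<tau> = 0" using k by auto
      then show False using k z0[rule_format, of k] e by auto
    qed
    let ?m = "Max (range (\<lambda>j. z \<tau> $ j))"
    have "?m \<in> range (\<lambda>j. z \<tau> $ j)" by (rule Max_in) auto
    then obtain i where i0: "?m = z \<tau> $ i" by blast
    then have i: "z \<tau> $ i = ?m" by simp
    have imax: "\<forall>j. z \<tau> $ j \<le> z \<tau> $ i" unfolding i by (auto intro: Max_ge)
    have ige: "z \<tau> $ i \<ge> e * (\<tau> + 1)" using imax k(2) by (meson order_trans)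
    have "e * (\<tau> + 1) > 0" using e tpos by (intro mult_pos_pos) auto
    then have zpos: "z \<tau> $ i > 0" using ige by linarith
    have "z' \<tau> $ i \<le> 0" using c k(1) imax zpos by blast
    then have neg: "z' \<tau> $ i - e < 0" using e by simp
    from has_real_derivative_neg_dec_left[OF hd[OF k(1)] neg]
    obtain dd where dd: "dd > 0" "\<forall>h>0. \<tau> - h \<in> {0..b} \<longrightarrow> h < dd \<longrightarrow>
        z \<tau> $ i - e * (\<tau> + 1) < z (\<tau> - h) $ i - e * (\<tau> - h + 1)" by blast
    define h where "h = min dd \<tau> / 2"
    have h: "h > 0" "h < dd" "h \<le> \<tau>" "\<tau> - h \<in> {0..b}" "\<tau> - h < \<tau>"
      using dd tpos k(1) by (auto simp: h_def)
    have "z \<tau> $ i - e * (\<tau> + 1) < z (\<tau> - h) $ i - e * (\<tau> - h + 1)" using dd h by auto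
    moreover have "z (\<tau> - h) $ i < e * (\<tau> - h + 1)" using below h by auto
    ultimately show False using ige by linarith
  qed
  show ?thesis
  proof (intro ballI, rule ccontr)
    fix t assume t: "t \<in> {0..b}" and "\<not> z t $ i \<le> 0"
    then have pos: "z t $ i > 0" by simp
    define e where "e = z t $ i / (t + 1)"
    have "e > 0" using pos t by (simp add: e_def)
    from key[OF this] t have "z t $ i < e * (t+1)" by auto
    also have "\<dots> = z t $ i" using t by (simp add: e_def)
    finally show False by simp
  qed
qed

primrec pic :: "(real^'n \<Rightarrow> real^'n) \<Rightarrow> real^'n \<Rightarrow> nat \<Rightarrow> real \<Rightarrow> real^'n" where
  "pic F u0 0 = (\<lambda>t. u0)"
| "pic F u0 (Suc n) = (\<lambda>t. u0 + integral {0..t} (\<lambda>s. F (pic F u0 n s)))"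

lemma pow_integral:
  assumes "0 \<le> t"
  shows "((\<lambda>s. s^k) has_integral t^(Suc k) / Suc k) {0..t}"
proof -
  have "((\<lambda>s. s^k) has_integral ((\<lambda>s. s^(Suc k) / Suc k) t - (\<lambda>s. s^(Suc k) / Suc k) 0)) {0..t}"
  proof (rule fundamental_theorem_of_calculus[OF assms])
    fix x :: real
    have "((\<lambda>s. s^(Suc k) / Suc k) has_real_derivative (real (Suc k) * x ^ (Suc k - Suc 0)) / real (Suc k)) (at x within {0..t})"
      by (rule has_field_derivative_at_within, rule DERIV_cdivide, rule DERIV_pow)
    then have "((\<lambda>s. s^(Suc k) / Suc k) has_real_derivative x^k) (at x within {0..t})"
      by (simp del: of_nat_Suc)
    then show "((\<lambda>s. s^(Suc k) / Suc k) has_vector_derivative x^k) (at x within {0..t})"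
      by (simp add: has_real_derivative_iff_has_vector_derivative)
  qed
  then show ?thesis by simp
qed

lemma lip_cont:
  fixes F :: "real^'n \<Rightarrow> real^'n"
  assumes lip: "\<forall>a b. norm (F a - F b) \<le> L * norm (a - b)" and L: "0 \<le> L"
  shows "continuous_on S F"
  unfolding continuous_on_iff
proof (intro ballI allI impI)
  fix x e assume "x \<in> S" "(0::real) < e"
  show "\<exists>d>0. \<forall>x'\<in>S. dist x' x < d \<longrightarrow> dist (F x') (F x) < e"
  proof (intro exI[of _ "e / (L + 1)"] conjI ballI impI)
    show "0 < e / (L+1)" using \<open>0 < e\<close> L by simp
    fix x' assume "dist x' x < e / (L + 1)"
    then have "(L+1) * dist x' x < e" using L by (simp add: field_simps)
    moreover have "dist (F x') (F x) \<le> L * dist x' x" using lip by (simp add: dist_norm)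
    moreover have "L * dist x' x \<le> (L+1) * dist x' x" by (simp add: mult_right_mono)
    ultimately show "dist (F x') (F x) < e" by linarith
  qed
qed

lemma picard:
  fixes F :: "real^'n \<Rightarrow> real^'n"
  assumes lip: "\<forall>a b. norm (F a - F b) \<le> L * norm (a - b)" and L: "0 \<le> L"
  shows "\<exists>v. v 0 = u0 \<and> (\<forall>t\<ge>0. (v has_vector_derivative F (v t)) (at t within {0..}))"
proof -
  have Fc: "continuous_on S F" for S by (rule lip_cont[OF lip L])
  let ?p = "pic F u0"
  have cont: "continuous_on {0..T} (?p n)" for n T
  proof (induct n)
    case 0 then show ?case by simp
  next
    case (Suc n)
    have c2: "continuous_on {0..T} (\<lambda>s. F (?p n s))"
      by (rule continuous_on_compose2[OF Fc Suc]) auto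
    have "continuous (at x within {0..T}) (\<lambda>t. integral {0..t} (\<lambda>s. F (?p n s)))" if "x \<in> {0..T}" for x
      by (rule has_vector_derivative_continuous, rule integral_has_vector_derivative[OF c2 that])
    then have "continuous_on {0..T} (\<lambda>t. integral {0..t} (\<lambda>s. F (?p n s)))"
      using continuous_on_eq_continuous_within by blast
    then show ?case by (auto intro!: continuous_intros)
  qed
  have intg: "(\<lambda>s. F (?p n s)) integrable_on {0..t}" for n t
    by (rule integrable_continuous_interval, rule continuous_on_compose2[OF Fc cont]) auto
  define B where "B = norm (F u0)"
  have bnd: "norm (?p (Suc n) t - ?p n t) \<le> B * L^n * t^(Suc n) / fact (Suc n)" if "0 \<le> t" for n t
    using that
  proof (induct n arbitrary: t)
    case 0
    then show ?case by (simp add: B_def)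
  next
    case (Suc n)
    have "?p (Suc (Suc n)) t - ?p (Suc n) t = integral {0..t} (\<lambda>s. F (?p (Suc n) s) - F (?p n s))"
      using integral_diff[OF intg[of "Suc n" t] intg[of n t]] by simp
    also have "norm \<dots> \<le> integral {0..t} (\<lambda>s. L * (B * L^n / fact (Suc n)) * s^(Suc n))"
    proof (rule integral_norm_bound_integral)
      show "(\<lambda>s. F (?p (Suc n) s) - F (?p n s)) integrable_on {0..t}"
        by (intro integrable_diff intg)
      show "(\<lambda>s. L * (B * L^n / fact (Suc n)) * s^(Suc n)) integrable_on {0..t}"
        by (intro integrable_continuous_interval continuous_intros)
      fix s assume s: "s \<in> {0..t}"
      have "norm (F (?p (Suc n) s) - F (?p n s)) \<le> L * norm (?p (Suc n) s - ?p n s)" using lip by blast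
      also have "\<dots> \<le> L * (B * L^n * s^(Suc n) / fact (Suc n))"
        using s by (intro mult_left_mono Suc.hyps L) auto
      finally show "norm (F (?p (Suc n) s) - F (?p n s)) \<le> L * (B * L^n / fact (Suc n)) * s^(Suc n)"
        by (simp add: field_simps)
    qed
    also have "\<dots> = L * (B * L^n / fact (Suc n)) * (t^(Suc (Suc n)) / Suc (Suc n))"
      using integral_unique[OF has_integral_mult_right[OF pow_integral[OF Suc.prems, of "Suc n"]]] by simp
    also have "\<dots> = B * L ^ Suc n * t ^ Suc (Suc n) / fact (Suc (Suc n))"
      by (simp add: field_simps del: of_nat_Suc)
    finally show ?case .
  qed
  define d where "d i t = ?p (Suc i) t - ?p i t" for i t
  define v where "v t = u0 + (\<Sum>i. d i t)" for t
  have tele: "?p n t = u0 + (\<Sum>i<n. d i t)" for n t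
    unfolding d_def by (subst sum_lessThan_telescope) simp
  have B0: "0 \<le> B" by (simp add: B_def)
  have ul: "uniform_limit {0..T} ?p v sequentially" if T: "0 \<le> T" for T
  proof -
    define Mn where "Mn n = B * L^n * T^(Suc n) / fact (Suc n)" for n
    have "uniform_limit {0..T} (\<lambda>n t. \<Sum>i<n. d i t) (\<lambda>t. \<Sum>i. d i t) sequentially"
    proof (rule Weierstrass_m_test)
      fix n t assume t: "t \<in> {0..T}"
      have "norm (d n t) \<le> B * L^n * t^(Suc n) / fact (Suc n)" unfolding d_def using bnd t by auto
      also have "\<dots> \<le> Mn n" unfolding Mn_def using t B0 L
        by (intro divide_right_mono mult_left_mono power_mono) auto
      finally show "norm (d n t) \<le> Mn n" .
    next
      show "summable Mn"
      proof (rule summable_comparison_test')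
        show "summable (\<lambda>n. (B * T) * (inverse (fact n) * (L * T)^n))"
          by (intro summable_mult summable_exp)
        fix n :: nat
        have "norm (Mn n) = (B * T) * ((L*T)^n / fact (Suc n))"
          unfolding Mn_def using B0 L T by (simp add: power_mult_distrib field_simps)
        also have "\<dots> \<le> (B * T) * ((L*T)^n / fact n)"
          using B0 L T by (intro mult_left_mono divide_left_mono) (auto simp: fact_mono)
        finally show "norm (Mn n) \<le> (B * T) * (inverse (fact n) * (L * T)^n)"
          by (simp add: field_simps)
      qed
    qed
    then have "uniform_limit {0..T} (\<lambda>n t. u0 + (\<Sum>i<n. d i t)) (\<lambda>t. u0 + (\<Sum>i. d i t)) sequentially"
      by (intro uniform_limit_intros)
    then show ?thesis unfolding v_def tele[symmetric] by simp
  qed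
  have vcont: "continuous_on {0..T} v" if "0 \<le> T" for T
    by (rule uniform_limit_theorem[OF always_eventually ul[OF that]]) (auto intro: cont)
  have Fv: "continuous_on {0..T} (\<lambda>s. F (v s))" if "0 \<le> T" for T
    by (rule continuous_on_compose2[OF Fc vcont[OF that]]) auto
  have inteq: "v t = u0 + integral {0..t} (\<lambda>s. F (v s))" if t: "0 \<le> t" for t
  proof -
    have lim1: "(\<lambda>n. ?p (Suc n) t) \<longlonglongrightarrow> v t"
      using LIMSEQ_Suc[OF tendsto_uniform_limitI[OF ul[OF t], of t]] t by simp
    have lim3: "(\<lambda>n. integral {0..t} (\<lambda>s. F (?p n s))) \<longlonglongrightarrow> integral {0..t} (\<lambda>s. F (v s))"
    proof (rule LIMSEQ_I)
      fix e :: real assume e: "0 < e"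
      define e' where "e' = e / (L * t + 1)"
      have e': "0 < e'" using e L t unfolding e'_def by (intro divide_pos_pos) (auto intro: add_nonneg_pos)
      from uniform_limitD[OF ul[OF t] e'] obtain N where N: "\<forall>n\<ge>N. \<forall>x\<in>{0..t}. dist (?p n x) (v x) < e'"
        unfolding eventually_sequentially by blast
      show "\<exists>no. \<forall>n\<ge>no. norm (integral {0..t} (\<lambda>s. F (?p n s)) - integral {0..t} (\<lambda>s. F (v s))) < e"
      proof (intro exI allI impI)
        fix n assume n: "N \<le> n"
        have "integral {0..t} (\<lambda>s. F (?p n s)) - integral {0..t} (\<lambda>s. F (v s)) = integral {0..t} (\<lambda>s. F (?p n s) - F (v s))"
          by (rule integral_diff[symmetric, OF intg]) (rule integrable_continuous_interval[OF Fv[OF t]])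
        also have "norm \<dots> \<le> (L * e') * Henstock_Kurzweil_Integration.content {0..t}"
        proof (rule has_integral_bound_real[where S="{}"])
          show "0 \<le> L * e'" using L e' by simp
          show "((\<lambda>s. F (?p n s) - F (v s)) has_integral integral {0..t} (\<lambda>s. F (?p n s) - F (v s))) {0..t}"
            by (intro integrable_integral integrable_diff intg integrable_continuous_interval Fv t)
          fix s assume s: "s \<in> {0..t} - {}"
          have "norm (F (?p n s) - F (v s)) \<le> L * norm (?p n s - v s)" using lip by blast
          also have "\<dots> \<le> L * e'"
          proof -
            have "dist (?p n s) (v s) < e'" using N n s by blast
            then show ?thesis using L by (intro mult_left_mono) (auto simp: dist_norm)
          qed
          finally show "norm (F (?p n s) - F (v s)) \<le> L * e'" .
        qed auto
        also have "\<dots> = L * e' * t" using t by simp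
        also have "\<dots> < e"
        proof -
          have Lt: "0 \<le> L * t" using L t by simp
          have "L * e' * t = e * ((L * t) / (L * t + 1))" by (simp add: e'_def)
          moreover have "(L * t) / (L * t + 1) < 1" using Lt by simp
          ultimately show ?thesis using e by (metis mult.right_neutral mult_strict_left_mono)
        qed
        finally show "norm (integral {0..t} (\<lambda>s. F (?p n s)) - integral {0..t} (\<lambda>s. F (v s))) < e" .
      qed
    qed
    have lim2: "(\<lambda>n. ?p (Suc n) t) \<longlonglongrightarrow> u0 + integral {0..t} (\<lambda>s. F (v s))"
      using tendsto_add[OF tendsto_const lim3, of u0] by simp
    show ?thesis using LIMSEQ_unique[OF lim1 lim2] .
  qed
  have "(v has_vector_derivative F (v t)) (at t within {0..})" if t: "0 \<le> t" for t
  proof -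
    have "((\<lambda>u. u0 + integral {0..u} (\<lambda>s. F (v s))) has_vector_derivative 0 + F (v t)) (at t within {0..t+1})"
      by (intro has_vector_derivative_add has_vector_derivative_const integral_has_vector_derivative Fv) (use t in auto)
    then have X: "((\<lambda>u. u0 + integral {0..u} (\<lambda>s. F (v s))) has_vector_derivative F (v t)) (at t within {0..t+1})"
      by simp
    have "(v has_vector_derivative F (v t)) (at t within {0..t+1})"
    proof (rule has_vector_derivative_transform[OF _ _ X])
      show "t \<in> {0..t+1}" using t by simp
      fix x :: real assume "x \<in> {0..t+1}"
      then show "v x = u0 + integral {0..x} (\<lambda>s. F (v s))" by (intro inteq) simp
    qed
    then show ?thesis by (rule within_extend) (use t in auto)
  qed
  moreover have "v 0 = u0"
  proof -
    have "v 0 = u0 + integral {0..0} (\<lambda>s. F (v s))" by (rule inteq) simp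
    then show ?thesis by simp
  qed
  ultimately show ?thesis by blast
qed




lemma qmax:
  assumes q: "Q_matrix q" and m: "\<forall>j. x$j \<le> x$i"
  shows "(q *v x) $ i \<le> 0"
proof -
  have rs: "(\<Sum>j\<in>UNIV. q$i$j) = 0" using q by (simp add: Q_matrix_def)
  have "(q *v x) $ i = (\<Sum>j\<in>UNIV. q$i$j * x$j) - (\<Sum>j\<in>UNIV. q$i$j) * x$i"
    using rs by (simp add: matrix_vector_mult_def)
  also have "\<dots> = (\<Sum>j\<in>UNIV. q$i$j * (x$j - x$i))"
    by (simp add: sum_distrib_right sum_subtractf right_diff_distrib)
  also have "\<dots> \<le> 0"
  proof (rule sum_nonpos)
    fix j
    show "q$i$j * (x$j - x$i) \<le> 0"
    proof (cases "j = i")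
      case True then show ?thesis by simp
    next
      case False
      then have "q$i$j \<ge> 0" using q by (simp add: Q_matrix_def)
      moreover have "x$j - x$i \<le> 0" using m by simp
      ultimately show ?thesis by (simp add: mult_nonneg_nonpos)
    qed
  qed
  finally show ?thesis .
qed

lemma q_vec: "Q_matrix q \<Longrightarrow> q *v vec c = 0"
  by (simp add: Q_matrix_def matrix_vector_mult_def vec_eq_iff sum_distrib_right[symmetric])

lemma cmp_lin:
  fixes z :: "real \<Rightarrow> real^'n"
  assumes q: "Q_matrix q"
  and d: "\<forall>t\<in>{0..b}. (z has_vector_derivative z' t) (at t within {0..b})"
  and c: "\<forall>t\<in>{0..b}. \<forall>i. z' t $ i \<le> (q *v z t) $ i"
  and z0: "\<forall>i. z 0 $ i \<le> 0"
  shows "\<forall>t\<in>{0..b}. z t $ i \<le> 0"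
proof (rule cmp[OF d _ z0])
  show "\<forall>t\<in>{0..b}. \<forall>i. (\<forall>j. z t $ j \<le> z t $ i) \<longrightarrow> 0 < z t $ i \<longrightarrow> z' t $ i \<le> 0"
    using c qmax[OF q] by (meson order_trans)
qed

lemma hvd_eq: "(g has_vector_derivative D) F \<Longrightarrow> D = D' \<Longrightarrow> (g has_vector_derivative D') F"
  by simp

lemma row_abs: "Q_matrix q \<Longrightarrow> (\<Sum>l\<in>UNIV. \<bar>q$j$l\<bar>) = -2 * q$j$j"
proof -
  assume q: "Q_matrix q"
  have "(\<Sum>l\<in>UNIV. \<bar>q$j$l\<bar>) = \<bar>q$j$j\<bar> + (\<Sum>l\<in>UNIV-{j}. \<bar>q$j$l\<bar>)"
    by (rule sum.remove) auto
  also have "(\<Sum>l\<in>UNIV-{j}. \<bar>q$j$l\<bar>) = (\<Sum>l\<in>UNIV-{j}. q$j$l)"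
    using q by (intro sum.cong) (auto simp: Q_matrix_def)
  also have "\<bar>q$j$j\<bar> = - q$j$j" using q by (simp add: Q_matrix_def)
  moreover have "0 = q$j$j + (\<Sum>l\<in>UNIV-{j}. q$j$l)"
    using q sum.remove[of UNIV j "\<lambda>l. q$j$l"] by (simp add: Q_matrix_def)
  ultimately show ?thesis by linarith
qed

lemma shift_deriv:
  fixes v :: "real \<Rightarrow> real^'n"
  assumes "(v has_vector_derivative D) (at (s + r) within {0..})" "0 \<le> s"
  shows "((\<lambda>r. v (s + r)) has_vector_derivative D) (at r within {0..h})"
proof -
  have "((\<lambda>r. s + r) has_vector_derivative 1) (at r within {0..h})"
    by (auto intro!: derivative_eq_intros)
  moreover have "(v has_vector_derivative D) (at (s + r) within (\<lambda>r. s + r) ` {0..h})"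
    by (rule has_vector_derivative_within_subset[OF assms(1)]) (use assms(2) in auto)
  ultimately have "((v \<circ> (\<lambda>r. s + r)) has_vector_derivative 1 *\<^sub>R D) (at r within {0..h})"
    by (rule vector_diff_chain_within)
  then show ?thesis by (simp add: o_def)
qed

locale nis =
  fixes P :: "(real^'n^'n) set" and f :: "real^'n^'n \<Rightarrow> real^'n" and q0 :: "real^'n^'n"
  assumes QP: "\<forall>q\<in>P. Q_matrix q"
    and q0: "q0 \<in> P" "f q0 = 0"
    and fsup: "\<forall>q\<in>P. \<forall>i. f q $ i \<le> 0"
    and Qfin: "\<forall>u i. bdd_above ((\<lambda>q. (q *v u + f q) $ i) ` P)"
    and fbdd: "\<exists>C. \<forall>q\<in>P. (\<forall>i. \<bar>f q $ i\<bar> \<le> C)"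
begin

definition "Cf = (SOME C. \<forall>q\<in>P. (\<forall>i. \<bar>f q $ i\<bar> \<le> C))"

lemma Cf: "q \<in> P \<Longrightarrow> \<bar>f q $ i\<bar> \<le> Cf"
  using someI_ex[OF fbdd] unfolding Cf_def by blast

lemma Cf_nonneg: "0 \<le> Cf" using Cf[OF q0(1), of undefined] by (meson abs_ge_zero order_trans)

lemma Pne: "P \<noteq> {}" using q0 by auto

lemma M_ex: "\<exists>M. \<forall>q\<in>P. \<forall>i. (\<Sum>j\<in>UNIV. \<bar>q$i$j\<bar>) \<le> M"
proof -
  have "\<exists>B. \<forall>q\<in>P. - q$j$j \<le> B" for j
  proof -
    from Qfin obtain B where B: "\<forall>q\<in>P. (q *v (- axis j 1) + f q) $ j \<le> B"
      unfolding bdd_above_def by blast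
    have "- q$j$j \<le> B + Cf" if "q \<in> P" for q
    proof -
      have "(q *v (- axis j 1)) $ j = - q$j$j"
        by (simp add: matrix_vector_mult_def axis_def if_distrib cong: if_cong)
      then show ?thesis using B that Cf[OF that, of j] by fastforce
    qed
    then show ?thesis by blast
  qed
  then obtain B where B: "\<And>j. \<forall>q\<in>P. - q$j$j \<le> B j" by metis
  show ?thesis
  proof (intro exI ballI allI)
    fix q i assume q: "q \<in> P"
    have "(\<Sum>j\<in>UNIV. \<bar>q$i$j\<bar>) = -2 * q$i$i" using QP q by (simp add: row_abs)
    also have "\<dots> \<le> 2 * \<bar>B i\<bar>" using B[of i] q by fastforce
    also have "\<dots> \<le> (\<Sum>j\<in>UNIV. 2 * \<bar>B j\<bar>)" by (rule member_le_sum) auto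
    finally show "(\<Sum>j\<in>UNIV. \<bar>q$i$j\<bar>) \<le> (\<Sum>j\<in>UNIV. 2 * \<bar>B j\<bar>)" .
  qed
qed

definition "M = (SOME M. \<forall>q\<in>P. \<forall>i. (\<Sum>j\<in>UNIV. \<bar>q$i$j\<bar>) \<le> M)"

lemma M: "q \<in> P \<Longrightarrow> (\<Sum>j\<in>UNIV. \<bar>q$i$j\<bar>) \<le> M"
  using someI_ex[OF M_ex] unfolding M_def by blast

lemma M_nonneg: "0 \<le> M"
  using M[OF q0(1)] by (meson order_trans sum_nonneg abs_ge_zero)

lemma qv_bound:
  assumes q: "q \<in> P" and R: "\<forall>j. \<bar>x$j\<bar> \<le> R"
  shows "\<bar>(q *v x) $ i\<bar> \<le> M * R"
proof -
  have R0: "0 \<le> R" using R by (meson abs_ge_zero order_trans)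
  have "\<bar>(q *v x) $ i\<bar> = \<bar>\<Sum>j\<in>UNIV. q$i$j * x$j\<bar>" by (simp add: matrix_vector_mult_def)
  also have "\<dots> \<le> (\<Sum>j\<in>UNIV. \<bar>q$i$j\<bar> * R)"
    by (rule order_trans[OF sum_abs]) (auto intro!: sum_mono mult_left_mono simp: abs_mult R)
  also have "\<dots> = (\<Sum>j\<in>UNIV. \<bar>q$i$j\<bar>) * R" by (simp add: sum_distrib_right)
  also have "\<dots> \<le> M * R" by (rule mult_right_mono[OF M[OF q] R0])
  finally show ?thesis .
qed

lemma Qcomp: "Qop P f w $ i = (SUP q\<in>P. (q *v w + f q) $ i)"
  by (simp add: Qop_def vSup_def)

lemma Q_upper: "q \<in> P \<Longrightarrow> (q *v w + f q) $ i \<le> Qop P f w $ i"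
  unfolding Qcomp by (rule cSUP_upper) (use Qfin in auto)

lemma Q_least: "(\<And>q. q \<in> P \<Longrightarrow> (q *v w + f q) $ i \<le> c) \<Longrightarrow> Qop P f w $ i \<le> c"
  unfolding Qcomp by (rule cSUP_least[OF Pne])

lemma Q_bound:
  assumes R: "\<forall>j. \<bar>w$j\<bar> \<le> R"
  shows "\<bar>Qop P f w $ i\<bar> \<le> M * R"
proof -
  have "Qop P f w $ i \<le> M * R"
  proof (rule Q_least)
    fix q assume q: "q \<in> P"
    have "(q *v w) $ i \<le> M * R" using qv_bound[OF q R, of i] by simp
    moreover have "f q $ i \<le> 0" using fsup q by blast
    ultimately show "(q *v w + f q) $ i \<le> M * R" by simp
  qed
  moreover have "- (M * R) \<le> Qop P f w $ i"
    using Q_upper[OF q0(1), of w i] qv_bound[OF q0(1) R, of i] q0(2) by simp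
  ultimately show ?thesis by simp
qed

lemma Q_diff:
  assumes "\<And>q. q \<in> P \<Longrightarrow> (q *v (a - b)) $ i \<le> \<delta>"
  shows "Qop P f a $ i \<le> Qop P f b $ i + \<delta>"
proof (rule Q_least)
  fix q assume q: "q \<in> P"
  have "(q *v a + f q) $ i = (q *v b + f q) $ i + (q *v (a - b)) $ i"
    by (simp add: matrix_vector_mult_diff_distrib)
  also have "\<dots> \<le> Qop P f b $ i + \<delta>" using Q_upper[OF q] assms[OF q] by (intro add_mono)
  finally show "(q *v a + f q) $ i \<le> Qop P f b $ i + \<delta>" .
qed

lemma Q_lip: "norm (Qop P f a - Qop P f b) \<le> (CARD('n) * M) * norm (a - b)"
proof -
  have c: "\<bar>Qop P f a $ i - Qop P f b $ i\<bar> \<le> M * norm (a - b)" for i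
  proof -
    have R1: "\<forall>j. \<bar>(a - b) $ j\<bar> \<le> norm (a - b)" by (intro allI component_le_norm_cart)
    have R2: "\<forall>j. \<bar>(b - a) $ j\<bar> \<le> norm (a - b)" by (metis component_le_norm_cart norm_minus_commute)
    have "Qop P f a $ i \<le> Qop P f b $ i + M * norm (a - b)"
      by (rule Q_diff, rule abs_le_D1, rule qv_bound[OF _ R1])
    moreover have "Qop P f b $ i \<le> Qop P f a $ i + M * norm (a - b)"
      by (rule Q_diff, rule abs_le_D1, rule qv_bound[OF _ R2])
    ultimately show ?thesis by simp
  qed
  have "norm (Qop P f a - Qop P f b) \<le> (\<Sum>i\<in>UNIV. \<bar>(Qop P f a - Qop P f b) $ i\<bar>)"
    by (rule norm_le_l1_cart)
  also have "\<dots> \<le> (\<Sum>i\<in>(UNIV::'n set). M * norm (a - b))" by (intro sum_mono) (use c in simp)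
  also have "\<dots> = (CARD('n) * M) * norm (a - b)" by simp
  finally show ?thesis .
qed

lemma existence: "\<exists>v. classical_solution P f u0 v"
proof -
  have L0: "0 \<le> real CARD('n) * M" using M_nonneg by simp
  from picard[OF _ L0, of "Qop P f" u0] Q_lip obtain v where
    v0: "v 0 = u0" and vd: "\<forall>t\<ge>0. (v has_vector_derivative Qop P f (v t)) (at t within {0..})"
    by blast
  have vc: "continuous_on {0..} v"
    unfolding continuous_on_eq_continuous_within
  proof
    fix t :: real assume "t \<in> {0..}"
    then have "(v has_vector_derivative Qop P f (v t)) (at t within {0..})" using vd by simp
    then show "continuous (at t within {0..}) v" by (rule has_vector_derivative_continuous)
  qed
  have "continuous_on {0..} (\<lambda>t. Qop P f (v t))"
    by (rule continuous_on_compose2[OF lip_cont[OF _ L0] vc]) (use Q_lip in auto)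
  then show ?thesis unfolding classical_solution_def using v0 vd by blast
qed

end




context nis begin

lemma Sq_d0: "0 \<le> r \<Longrightarrow> ((\<lambda>r. Sq f q r w) has_vector_derivative (q *v Sq f q r w + f q)) (at r within {0..h})"
  by (rule has_vector_derivative_within_subset[OF Sq_deriv]) auto

lemma Sq_above:
  assumes q: "q \<in> P" and h: "0 \<le> h" and c: "\<forall>j. w$j \<le> c"
  shows "Sq f q h w $ i \<le> c"
proof -
  have Qq: "Q_matrix q" using QP q by blast
  have "\<forall>r\<in>{0..h}. (Sq f q r w - vec c) $ i \<le> 0"
  proof (rule cmp_lin[OF Qq, where z="\<lambda>r. Sq f q r w - vec c" and z'="\<lambda>r. q *v Sq f q r w + f q"])
    show "\<forall>r\<in>{0..h}. ((\<lambda>r. Sq f q r w - vec c) has_vector_derivative q *v Sq f q r w + f q) (at r within {0..h})"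
      by (auto intro!: hvd_eq[OF has_vector_derivative_diff[OF Sq_d0 has_vector_derivative_const]])
    show "\<forall>r\<in>{0..h}. \<forall>i. (q *v Sq f q r w + f q) $ i \<le> (q *v (Sq f q r w - vec c)) $ i"
      using fsup q by (auto simp: matrix_vector_mult_diff_distrib q_vec[OF Qq])
    show "\<forall>i. (Sq f q 0 w - vec c) $ i \<le> 0" using c by (simp add: Sq_zero)
  qed
  then show ?thesis using h by simp
qed

lemma Sq_below0:
  assumes h: "0 \<le> h" and c: "\<forall>j. c \<le> w$j"
  shows "c \<le> Sq f q0 h w $ i"
proof -
  have Qq: "Q_matrix q0" using QP q0 by blast
  have "\<forall>r\<in>{0..h}. (vec c - Sq f q0 r w) $ i \<le> 0"
  proof (rule cmp_lin[OF Qq, where z="\<lambda>r. vec c - Sq f q0 r w" and z'="\<lambda>r. - (q0 *v Sq f q0 r w + f q0)"])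
    show "\<forall>r\<in>{0..h}. ((\<lambda>r. vec c - Sq f q0 r w) has_vector_derivative - (q0 *v Sq f q0 r w + f q0)) (at r within {0..h})"
      by (auto intro!: hvd_eq[OF has_vector_derivative_diff[OF has_vector_derivative_const Sq_d0]])
    show "\<forall>r\<in>{0..h}. \<forall>i. (- (q0 *v Sq f q0 r w + f q0)) $ i \<le> (q0 *v (vec c - Sq f q0 r w)) $ i"
      using q0 by (auto simp: matrix_vector_mult_diff_distrib q_vec[OF Qq])
    show "\<forall>i. (vec c - Sq f q0 0 w) $ i \<le> 0" using c by (simp add: Sq_zero)
  qed
  then show ?thesis using h by simp
qed

lemma Sq_mono:
  assumes q: "q \<in> P" and h: "0 \<le> h" and c: "\<forall>j. w$j \<le> w'$j + c"
  shows "Sq f q h w $ i \<le> Sq f q h w' $ i + c"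
proof -
  have Qq: "Q_matrix q" using QP q by blast
  have "\<forall>r\<in>{0..h}. (Sq f q r w - Sq f q r w' - vec c) $ i \<le> 0"
  proof (rule cmp_lin[OF Qq, where z="\<lambda>r. Sq f q r w - Sq f q r w' - vec c"
        and z'="\<lambda>r. (q *v Sq f q r w + f q) - (q *v Sq f q r w' + f q)"])
    show "\<forall>r\<in>{0..h}. ((\<lambda>r. Sq f q r w - Sq f q r w' - vec c) has_vector_derivative
        (q *v Sq f q r w + f q) - (q *v Sq f q r w' + f q)) (at r within {0..h})"
      by (auto intro!: hvd_eq[OF has_vector_derivative_diff[OF has_vector_derivative_diff[OF Sq_d0 Sq_d0] has_vector_derivative_const]])
    show "\<forall>r\<in>{0..h}. \<forall>i. ((q *v Sq f q r w + f q) - (q *v Sq f q r w' + f q)) $ i \<le> (q *v (Sq f q r w - Sq f q r w' - vec c)) $ i"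
      by (auto simp: matrix_vector_mult_diff_distrib q_vec[OF Qq])
    show "\<forall>i. (Sq f q 0 w - Sq f q 0 w' - vec c) $ i \<le> 0"
    proof
      fix i from c have "w$i \<le> w'$i + c" by blast
      then show "(Sq f q 0 w - Sq f q 0 w' - vec c) $ i \<le> 0" by (simp add: Sq_zero)
    qed
  qed
  from bspec[OF this, of h] h show ?thesis by simp
qed

lemma q_one: "Q_matrix q \<Longrightarrow> q *v 1 = 0"
  using q_vec[of q 1] by simp

lemma Sq_taylor:
  assumes q: "q \<in> P" and h: "0 \<le> h" and R: "\<forall>j. \<bar>w$j\<bar> \<le> R"
  shows "w$i + h * (q *v w + f q)$i - (M * (M * R + Cf) / 2) * h^2 \<le> Sq f q h w $ i"
proof -
  have Qq: "Q_matrix q" using QP q by blast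
  define a where "a = q *v w + f q"
  define C where "C = M * (M * R + Cf) / 2"
  have abnd: "\<forall>j. \<bar>a$j\<bar> \<le> M * R + Cf"
  proof
    fix j
    have "\<bar>a$j\<bar> \<le> \<bar>(q *v w)$j\<bar> + \<bar>f q $ j\<bar>" unfolding a_def by (simp add: abs_triangle_ineq)
    also have "\<dots> \<le> M * R + Cf" using qv_bound[OF q R, of j] Cf[OF q, of j] by simp
    finally show "\<bar>a$j\<bar> \<le> M * R + Cf" .
  qed
  have qa: "\<bar>(q *v a) $ k\<bar> \<le> 2 * C" for k
    using qv_bound[OF q abnd, of k] by (simp add: C_def)
  have d1: "((\<lambda>r. r *\<^sub>R a) has_vector_derivative a) (at r within {0..h})" for r
    by (rule hvd_eq[OF has_vector_derivative_scaleR[OF DERIV_ident has_vector_derivative_const]]) simp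
  have d2: "((\<lambda>r. (C * r^2) *\<^sub>R vec 1) has_vector_derivative (2 * C * r) *\<^sub>R vec 1) (at r within {0..h})" for r
    by (rule hvd_eq[OF has_vector_derivative_scaleR[OF DERIV_cmult[OF DERIV_pow] has_vector_derivative_const]]) (simp add: mult_ac)
  have "\<forall>r\<in>{0..h}. (w + r *\<^sub>R a - (C * r^2) *\<^sub>R vec 1 - Sq f q r w) $ i \<le> 0"
  proof (rule cmp_lin[OF Qq, where z="\<lambda>r. w + r *\<^sub>R a - (C * r^2) *\<^sub>R vec 1 - Sq f q r w"
        and z'="\<lambda>r. a - (2 * C * r) *\<^sub>R vec 1 - (q *v Sq f q r w + f q)"])
    show "\<forall>r\<in>{0..h}. ((\<lambda>r. w + r *\<^sub>R a - (C * r^2) *\<^sub>R vec 1 - Sq f q r w) has_vector_derivative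
        a - (2 * C * r) *\<^sub>R vec 1 - (q *v Sq f q r w + f q)) (at r within {0..h})"
      by (intro ballI, rule hvd_eq[OF has_vector_derivative_diff[OF has_vector_derivative_diff[OF
          has_vector_derivative_add[OF has_vector_derivative_const d1] d2] Sq_d0]]) auto
    show "\<forall>r\<in>{0..h}. \<forall>k. (a - (2 * C * r) *\<^sub>R vec 1 - (q *v Sq f q r w + f q)) $ k
        \<le> (q *v (w + r *\<^sub>R a - (C * r^2) *\<^sub>R vec 1 - Sq f q r w)) $ k"
    proof (intro ballI allI)
      fix r k assume r: "r \<in> {0..h}"
      have e1: "(a - (2 * C * r) *\<^sub>R vec 1 - (q *v Sq f q r w + f q)) $ k
          = (q *v w) $ k - 2 * C * r - (q *v Sq f q r w) $ k"
        by (simp add: a_def)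
      have e2: "(q *v (w + r *\<^sub>R a - (C * r^2) *\<^sub>R vec 1 - Sq f q r w)) $ k
          = (q *v w) $ k + r * (q *v a) $ k - (q *v Sq f q r w) $ k"
        by (simp add: matrix_vector_mult_diff_distrib matrix_vector_right_distrib
            matrix_vector_mult_scaleR q_vec[OF Qq] q_one[OF Qq])
      have "- (2 * C) \<le> (q *v a) $ k" using qa[of k] by linarith
      then have "r * (- (2 * C)) \<le> r * (q *v a) $ k" using r by (intro mult_left_mono) auto
      then have "- (2 * C) * r \<le> r * (q *v a) $ k" by (simp add: mult.commute)
      then show "(a - (2 * C * r) *\<^sub>R vec 1 - (q *v Sq f q r w + f q)) $ k
        \<le> (q *v (w + r *\<^sub>R a - (C * r^2) *\<^sub>R vec 1 - Sq f q r w)) $ k"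
        unfolding e1 e2 by simp
    qed
    show "\<forall>k. (w + 0 *\<^sub>R a - (C * 0^2) *\<^sub>R vec 1 - Sq f q 0 w) $ k \<le> 0" by (simp add: Sq_zero)
  qed
  then have "(w + h *\<^sub>R a - (C * h^2) *\<^sub>R vec 1 - Sq f q h w) $ i \<le> 0" using h by auto
  then show ?thesis by (simp add: a_def C_def)
qed

end




lemma d_lin: "((\<lambda>r. r *\<^sub>R a) has_vector_derivative a) (at r within S)"
  by (rule hvd_eq[OF has_vector_derivative_scaleR[OF DERIV_ident has_vector_derivative_const]]) simp

lemma d_sq: "((\<lambda>r. (C * r^2) *\<^sub>R b) has_vector_derivative (2 * C * r) *\<^sub>R b) (at r within S)"
  by (rule hvd_eq[OF has_vector_derivative_scaleR[OF DERIV_cmult[OF DERIV_pow] has_vector_derivative_const]]) (simp add: mult_ac)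

context nis begin

lemma Ecomp: "Eop P f h w $ i = (SUP q\<in>P. Sq f q h w $ i)" by (simp add: Eop_def vSup_def)

lemma E_bdd: "0 \<le> h \<Longrightarrow> bdd_above ((\<lambda>q. Sq f q h w $ i) ` P)"
proof -
  assume h: "0 \<le> h"
  have "\<forall>j. w$j \<le> norm w" by (meson abs_ge_self component_le_norm_cart order_trans)
  then show ?thesis by (intro bdd_aboveI2) (rule Sq_above[OF _ h])
qed

lemma E_upper: "q \<in> P \<Longrightarrow> 0 \<le> h \<Longrightarrow> Sq f q h w $ i \<le> Eop P f h w $ i"
  unfolding Ecomp by (rule cSUP_upper[OF _ E_bdd])

lemma E_least: "(\<And>q. q \<in> P \<Longrightarrow> Sq f q h w $ i \<le> c) \<Longrightarrow> Eop P f h w $ i \<le> c"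
  unfolding Ecomp by (rule cSUP_least[OF Pne])

lemma E_mono: "0 \<le> h \<Longrightarrow> \<forall>j. w$j \<le> w'$j + c \<Longrightarrow> Eop P f h w $ i \<le> Eop P f h w' $ i + c"
  by (rule E_least) (meson Sq_mono E_upper add_right_mono order_trans)

lemma E_bound:
  assumes h: "0 \<le> h" and R: "\<forall>j. \<bar>w$j\<bar> \<le> R"
  shows "\<bar>Eop P f h w $ i\<bar> \<le> R"
proof -
  have "Eop P f h w $ i \<le> R"
    by (rule E_least, rule Sq_above[OF _ h]) (use R abs_le_D1 in auto)
  moreover have "- R \<le> Eop P f h w $ i"
  proof -
    have "- R \<le> Sq f q0 h w $ i"
    proof (rule Sq_below0[OF h], rule allI)
      fix j from R have "\<bar>w$j\<bar> \<le> R" by blast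
      then show "- R \<le> w$j" by linarith
    qed
    also have "\<dots> \<le> Eop P f h w $ i" by (rule E_upper[OF q0(1) h])
    finally show ?thesis .
  qed
  ultimately show ?thesis by simp
qed

lemma E_zero: "Eop P f 0 w = w"
  by (simp add: vec_eq_iff Ecomp Sq_zero Pne)

lemma sol_d:
  assumes "classical_solution P f u0 v"
  shows "v 0 = u0" "\<And>t. 0 \<le> t \<Longrightarrow> (v has_vector_derivative Qop P f (v t)) (at t within {0..})"
proof -
  from assms obtain v' where "\<forall>t\<ge>0. (v has_vector_derivative v' t) (at t within {0..}) \<and> v' t = Qop P f (v t)"
    and "v 0 = u0" unfolding classical_solution_def by blast
  then show "v 0 = u0" "\<And>t. 0 \<le> t \<Longrightarrow> (v has_vector_derivative Qop P f (v t)) (at t within {0..})" by auto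
qed

lemma sol_d0:
  assumes "classical_solution P f u0 v" "0 \<le> r"
  shows "(v has_vector_derivative Qop P f (v r)) (at r within {0..t})"
  by (rule has_vector_derivative_within_subset[OF sol_d(2)[OF assms]]) auto

lemma sol_bound:
  assumes sol: "classical_solution P f u0 v" and R: "\<forall>j. \<bar>u0$j\<bar> \<le> R" and t: "0 \<le> t"
  shows "\<bar>v t $ i\<bar> \<le> R"
proof -
  have "\<forall>r\<in>{0..t}. (v r - vec R) $ i \<le> 0"
  proof (rule cmp[where z="\<lambda>r. v r - vec R" and z'="\<lambda>r. Qop P f (v r)"])
    show "\<forall>r\<in>{0..t}. ((\<lambda>r. v r - vec R) has_vector_derivative Qop P f (v r)) (at r within {0..t})"
      by (intro ballI, rule hvd_eq[OF has_vector_derivative_diff[OF sol_d0[OF sol] has_vector_derivative_const]]) auto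
    show "\<forall>r\<in>{0..t}. \<forall>k. (\<forall>j. (v r - vec R) $ j \<le> (v r - vec R) $ k) \<longrightarrow> 0 < (v r - vec R) $ k \<longrightarrow> Qop P f (v r) $ k \<le> 0"
    proof (intro ballI allI impI)
      fix r k assume m: "\<forall>j. (v r - vec R) $ j \<le> (v r - vec R) $ k"
      show "Qop P f (v r) $ k \<le> 0"
      proof (rule Q_least)
        fix q assume q: "q \<in> P"
        have Qq: "Q_matrix q" using QP q by blast
        have "(q *v v r) $ k = (q *v (v r - vec R)) $ k" by (simp add: matrix_vector_mult_diff_distrib q_vec[OF Qq])
        also have "\<dots> \<le> 0" by (rule qmax[OF Qq m])
        finally show "(q *v v r + f q) $ k \<le> 0" using fsup q by (simp add: add_nonpos_nonpos)
      qed
    qed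
    show "\<forall>k. (v 0 - vec R) $ k \<le> 0" using R sol_d(1)[OF sol] by (auto simp: abs_le_iff)
  qed
  moreover have "\<forall>r\<in>{0..t}. (vec (-R) - v r) $ i \<le> 0"
  proof (rule cmp_lin[where q=q0 and z="\<lambda>r. vec (-R) - v r" and z'="\<lambda>r. - Qop P f (v r)"])
    show Qq: "Q_matrix q0" using QP q0 by blast
    show "\<forall>r\<in>{0..t}. ((\<lambda>r. vec (-R) - v r) has_vector_derivative - Qop P f (v r)) (at r within {0..t})"
      by (intro ballI, rule hvd_eq[OF has_vector_derivative_diff[OF has_vector_derivative_const sol_d0[OF sol]]]) auto
    show "\<forall>r\<in>{0..t}. \<forall>k. (- Qop P f (v r)) $ k \<le> (q0 *v (vec (-R) - v r)) $ k"
      using Q_upper[OF q0(1)] q0(2) by (simp add: matrix_vector_mult_diff_distrib q_vec[OF Qq])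
    show "\<forall>k. (vec (-R) - v 0) $ k \<le> 0"
    proof
      fix k from R have "\<bar>u0$k\<bar> \<le> R" by blast
      then show "(vec (-R) - v 0) $ k \<le> 0" using sol_d(1)[OF sol] by simp
    qed
  qed
  ultimately have "(v t - vec R) $ i \<le> 0" "(vec (-R) - v t) $ i \<le> 0" using t by auto
  then show ?thesis by (simp add: abs_le_iff)
qed

lemma sol_ge_S:
  assumes sol: "classical_solution P f u0 v" and q: "q \<in> P" and s: "0 \<le> s" and h: "0 \<le> h"
  shows "Sq f q h (v s) $ i \<le> v (s + h) $ i"
proof -
  have Qq: "Q_matrix q" using QP q by blast
  have "\<forall>r\<in>{0..h}. (Sq f q r (v s) - v (s + r)) $ i \<le> 0"
  proof (rule cmp_lin[OF Qq, where z="\<lambda>r. Sq f q r (v s) - v (s + r)"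
        and z'="\<lambda>r. (q *v Sq f q r (v s) + f q) - Qop P f (v (s + r))"])
    show "\<forall>r\<in>{0..h}. ((\<lambda>r. Sq f q r (v s) - v (s + r)) has_vector_derivative
        (q *v Sq f q r (v s) + f q) - Qop P f (v (s + r))) (at r within {0..h})"
      by (intro ballI has_vector_derivative_diff Sq_d0 shift_deriv sol_d(2)[OF sol]) (use s in auto)
    show "\<forall>r\<in>{0..h}. \<forall>k. ((q *v Sq f q r (v s) + f q) - Qop P f (v (s + r))) $ k
        \<le> (q *v (Sq f q r (v s) - v (s + r))) $ k"
    proof (intro ballI allI)
      fix r k
      show "((q *v Sq f q r (v s) + f q) - Qop P f (v (s + r))) $ k
        \<le> (q *v (Sq f q r (v s) - v (s + r))) $ k"
        using Q_upper[OF q, of "v (s + r)" k] by (simp add: matrix_vector_mult_diff_distrib)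
    qed
    show "\<forall>k. (Sq f q 0 (v s) - v (s + 0)) $ k \<le> 0" by (simp add: Sq_zero)
  qed
  then show ?thesis using h by auto
qed

lemma sol_taylor:
  assumes sol: "classical_solution P f u0 v" and R: "\<forall>j. \<bar>u0$j\<bar> \<le> R" and s: "0 \<le> s" and h: "0 \<le> h"
  shows "v (s + h) $ i \<le> v s $ i + h * Qop P f (v s) $ i + (M * (M * R) / 2) * h^2"
proof -
  define a where "a = Qop P f (v s)"
  define C where "C = M * (M * R) / 2"
  have abnd: "\<forall>j. \<bar>a$j\<bar> \<le> M * R"
    unfolding a_def by (intro allI Q_bound) (use sol_bound[OF sol R s] in auto)
  define z where "z r = v (s + r) - v s - r *\<^sub>R a - (C * r^2) *\<^sub>R vec 1" for r
  have "\<forall>r\<in>{0..h}. z r $ i \<le> 0"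
  proof (rule cmp[where z=z and z'="\<lambda>r. Qop P f (v (s + r)) - a - (2 * C * r) *\<^sub>R vec 1"])
    show "\<forall>r\<in>{0..h}. (z has_vector_derivative Qop P f (v (s + r)) - a - (2 * C * r) *\<^sub>R vec 1) (at r within {0..h})"
      unfolding z_def
      by (intro ballI, rule hvd_eq[OF has_vector_derivative_diff[OF has_vector_derivative_diff[OF
          has_vector_derivative_diff[OF shift_deriv[OF sol_d(2)[OF sol]] has_vector_derivative_const] d_lin] d_sq]])
        (use s in auto)
    show "\<forall>r\<in>{0..h}. \<forall>k. (\<forall>j. z r $ j \<le> z r $ k) \<longrightarrow> 0 < z r $ k \<longrightarrow>
        (Qop P f (v (s + r)) - a - (2 * C * r) *\<^sub>R vec 1) $ k \<le> 0"
    proof (intro ballI allI impI)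
      fix r k assume r: "r \<in> {0..h}" and m: "\<forall>j. z r $ j \<le> z r $ k"
      have "Qop P f (v (s + r)) $ k \<le> Qop P f (v s) $ k + r * (M * R * M)"
      proof (rule Q_diff)
        fix q assume q: "q \<in> P"
        have Qq: "Q_matrix q" using QP q by blast
        have "v (s + r) - v s = z r + r *\<^sub>R a + (C * r^2) *\<^sub>R vec 1" by (simp add: z_def)
        then have "(q *v (v (s + r) - v s)) $ k = (q *v z r) $ k + r * (q *v a) $ k"
          by (simp add: matrix_vector_right_distrib matrix_vector_mult_scaleR q_vec[OF Qq] q_one[OF Qq])
        also have "\<dots> \<le> 0 + r * (M * R * M)"
        proof (rule add_mono)
          show "(q *v z r) $ k \<le> 0" by (rule qmax[OF Qq m])
          have "(q *v a) $ k \<le> M * R * M" using qv_bound[OF q abnd, of k] by (simp add: mult_ac)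
          then show "r * (q *v a) $ k \<le> r * (M * R * M)" using r by (intro mult_left_mono) auto
        qed
        finally show "(q *v (v (s + r) - v s)) $ k \<le> r * (M * R * M)" by simp
      qed
      then show "(Qop P f (v (s + r)) - a - (2 * C * r) *\<^sub>R vec 1) $ k \<le> 0"
        by (simp add: a_def C_def algebra_simps)
    qed
    show "\<forall>k. z 0 $ k \<le> 0" by (simp add: z_def)
  qed
  then have "z h $ i \<le> 0" using h by auto
  then show ?thesis by (simp add: z_def a_def C_def algebra_simps)
qed

end




lemma hs_props:
  fixes \<pi> :: "real set"
  assumes fin: "finite \<pi>" and pos: "\<pi> \<subseteq> {0..}" and z: "0 \<in> \<pi>" and mx: "Max \<pi> = t"
  defines "ts \<equiv> sorted_list_of_set \<pi>"
  shows "\<forall>h\<in>set (map (\<lambda>k. ts!(Suc k) - ts!k) [0..<length ts - 1]). 0 \<le> h"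
    and "sum_list (map (\<lambda>k. ts!(Suc k) - ts!k) [0..<length ts - 1]) = t"
proof -
  have st: "set ts = \<pi>" "sorted ts" using fin by (auto simp: ts_def)
  have ne: "ts \<noteq> []" using st z by auto
  define n where "n = length ts"
  have n1: "1 \<le> n" using ne by (simp add: n_def Suc_le_eq)
  show "\<forall>h\<in>set (map (\<lambda>k. ts!(Suc k) - ts!k) [0..<length ts - 1]). 0 \<le> h"
    using st(2) by (auto intro!: sorted_nth_mono simp: diff_ge_0_iff_ge)
  have "sum_list (map (\<lambda>k. ts!(Suc k) - ts!k) [0..<n - 1]) = (\<Sum>k\<in>{..<n-1}. ts!(Suc k) - ts!k)"
    by (simp add: sum_set_upt_conv_sum_list_nat[symmetric] atLeast0LessThan)
  also have "\<dots> = ts!(n-1) - ts!0" by (rule sum_lessThan_telescope)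
  also have "ts!0 = 0"
  proof -
    have "ts!0 \<in> \<pi>" using st ne by (metis nth_mem length_greater_0_conv)
    then have a: "0 \<le> ts!0" using pos by auto
    from z st obtain j where j: "j < n" "ts!j = 0" by (metis in_set_conv_nth n_def)
    have "ts!0 \<le> ts!j" using st(2) j by (intro sorted_nth_mono) (auto simp: n_def)
    then show ?thesis using a j by simp
  qed
  also have "ts!(n-1) = t"
  proof -
    have tin: "t \<in> \<pi>" using mx fin z by (metis Max_in empty_iff)
    have "ts!(n-1) \<in> \<pi>" using st n1 by (metis nth_mem n_def diff_less zero_less_one less_le_trans)
    then have a: "ts!(n-1) \<le> t" using mx fin by (metis Max_ge)
    from tin st obtain j where j: "j < n" "ts!j = t" by (metis in_set_conv_nth n_def)
    have "ts!j \<le> ts!(n-1)" using st(2) j by (intro sorted_nth_mono) (auto simp: n_def)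
    then show ?thesis using a j by simp
  qed
  finally show "sum_list (map (\<lambda>k. ts!(Suc k) - ts!k) [0..<length ts - 1]) = t" by (simp add: n_def)
qed

lemma foldr_rep: "foldr (\<lambda>h g. E h \<circ> g) (replicate n c) id = (E c) ^^ n"
  by (induct n) auto

context nis begin

lemma fold_upper:
  assumes sol: "classical_solution P f u0 v"
  shows "\<forall>h\<in>set hs. 0 \<le> h \<Longrightarrow> foldr (\<lambda>h g. Eop P f h \<circ> g) hs id u0 $ i \<le> v (sum_list hs) $ i"
proof (induct hs arbitrary: i)
  case Nil then show ?case using sol_d(1)[OF sol] by simp
next
  case (Cons h hs)
  have h: "0 \<le> h" and hs: "\<forall>h\<in>set hs. 0 \<le> h" using Cons.prems by auto
  have S: "0 \<le> sum_list hs" using hs by (simp add: sum_list_nonneg)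
  let ?X = "foldr (\<lambda>h g. Eop P f h \<circ> g) hs id u0"
  have "Eop P f h ?X $ i \<le> Eop P f h (v (sum_list hs)) $ i + 0"
    by (rule E_mono[OF h], intro allI, simp only: add_0_right, rule Cons.hyps[OF hs])
  also have "\<dots> \<le> v (sum_list hs + h) $ i"
    by (simp, rule E_least, rule sol_ge_S[OF sol _ S h])
  finally have c: "Eop P f h ?X $ i \<le> v (sum_list hs + h) $ i" .
  have eq: "foldr (\<lambda>h g. Eop P f h \<circ> g) (h#hs) id u0 = Eop P f h ?X" by simp
  show ?case unfolding eq sum_list.Cons using c by (metis add.commute)
qed

lemma Epi_upper:
  assumes sol: "classical_solution P f u0 v" and pi: "\<pi> \<in> partitions t"
  shows "Epi P f \<pi> u0 $ i \<le> v t $ i"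
proof (cases "\<pi> = {0}")
  case True
  then have "t = 0" using pi by (simp add: partitions_def)
  then show ?thesis using True sol_d(1)[OF sol] by (simp add: Epi_def E_zero)
next
  case False
  have pp: "finite \<pi>" "\<pi> \<subseteq> {0..}" "0 \<in> \<pi>" "Max \<pi> = t" using pi by (auto simp: partitions_def)
  define ts where "ts = sorted_list_of_set \<pi>"
  define hs where "hs = map (\<lambda>k. ts!(Suc k) - ts!k) [0..<length ts - 1]"
  have E: "Epi P f \<pi> = foldr (\<lambda>h g. Eop P f h \<circ> g) hs id"
    using False by (simp add: Epi_def Let_def hs_def ts_def)
  have "\<forall>h\<in>set hs. 0 \<le> h" "sum_list hs = t"
    using hs_props[OF pp] by (simp_all add: hs_def ts_def)
  then show ?thesis using fold_upper[OF sol, of hs i] E by simp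
qed

lemma Epi_uniform:
  assumes t: "0 < t" and n: "1 \<le> n"
  defines "\<pi> \<equiv> set (map (\<lambda>k. real k * (t / n)) [0..<Suc n])"
  shows "\<pi> \<in> partitions t" "Epi P f \<pi> = (Eop P f (t / n)) ^^ n"
proof -
  define xs where "xs = map (\<lambda>k. real k * (t / n)) [0..<Suc n]"
  have pi: "\<pi> = set xs" by (simp add: \<pi>_def xs_def)
  have tin: "t \<in> \<pi>" unfolding \<pi>_def using n by (auto simp: image_iff intro!: bexI[of _ n])
  have le: "y \<le> t" if "y \<in> \<pi>" for y
  proof -
    have pimg: "\<pi> = (\<lambda>k. real k * (t / n)) ` {0..<Suc n}" by (simp only: \<pi>_def set_map set_upt)
    from that obtain k where k0: "k \<in> {0..<Suc n}" "y = real k * (t / n)" unfolding pimg by (rule imageE)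
    then have k: "k \<le> n" "y = real k * (t / n)" by auto
    have "real k * (t / n) \<le> real n * (t / n)" using k t by (intro mult_right_mono) auto
    then show ?thesis using k n by simp
  qed
  have mx: "Max \<pi> = t" by (rule Max_eqI, simp add: \<pi>_def, rule le, assumption, rule tin)
  show "\<pi> \<in> partitions t" unfolding partitions_def using mx t
    by (auto simp: \<pi>_def intro!: image_eqI[of 0])
  have tn: "0 < t / n" using t n by simp
  have sw: "sorted_wrt (<) xs"
    unfolding sorted_wrt_iff_nth_less
  proof (intro allI impI)
    fix i j assume ij: "i < j" "j < length xs"
    then have "xs!i = real i * (t / n)" "xs!j = real j * (t / n)"
      by (simp_all add: xs_def nth_map_upt del: upt_Suc)
    moreover have "real i * (t / n) < real j * (t / n)" using ij(1) tn by (intro mult_strict_right_mono) auto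
    ultimately show "xs!i < xs!j" by simp
  qed
  have ds: "distinct xs" using sw by (simp add: strict_sorted_iff)
  have sl: "sorted_list_of_set \<pi> = xs"
    unfolding pi using sw ds sorted_list_of_set_unique[of "set xs" xs] by (simp add: distinct_card)
  have ne: "\<pi> \<noteq> {0}" using tin t by auto
  have hs: "map (\<lambda>k. xs!(Suc k) - xs!k) [0..<length xs - 1] = replicate n (t / n)"
  proof -
    have "map (\<lambda>k. xs!(Suc k) - xs!k) [0..<length xs - 1] = map (\<lambda>k. t / n) [0..<n]"
      by (auto simp: xs_def algebra_simps nth_append add_divide_distrib simp del: upt_Suc)
    then show ?thesis by (simp add: map_replicate_const)
  qed
  have "Epi P f \<pi> = foldr (\<lambda>h g. Eop P f h \<circ> g) (map (\<lambda>k. xs!(Suc k) - xs!k) [0..<length xs - 1]) id"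
    using ne by (simp add: Epi_def Let_def sl)
  also have "\<dots> = foldr (\<lambda>h g. Eop P f h \<circ> g) (replicate n (t / n)) id" by (simp only: hs)
  also have "\<dots> = (Eop P f (t / n)) ^^ n" by (rule foldr_rep)
  finally show "Epi P f \<pi> = (Eop P f (t / n)) ^^ n" .
qed

end




context nis begin

lemma lower_est:
  assumes sol: "classical_solution P f u0 v" and R: "\<forall>j. \<bar>u0$j\<bar> \<le> R" and h: "0 < h"
  defines "D \<equiv> M * (M * R) / 2 + M * (M * R + Cf) / 2 + 1"
  shows "\<forall>i. v (real k * h) $ i \<le> ((Eop P f h) ^^ k) u0 $ i + real k * D * h^2"
proof (induct k)
  case 0 then show ?case using sol_d(1)[OF sol] by simp
next
  case (Suc k)
  show ?case
  proof
    fix i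
    define s where "s = real k * h"
    define w where "w = v s"
    define X where "X = ((Eop P f h) ^^ k) u0"
    have s: "0 \<le> s" using h by (simp add: s_def)
    have wR: "\<forall>j. \<bar>w$j\<bar> \<le> R" using sol_bound[OF sol R s] by (simp add: w_def)
    have tay: "v (s + h) $ i \<le> w $ i + h * Qop P f w $ i + (M * (M * R) / 2) * h^2"
      using sol_taylor[OF sol R s, of h i] h by (simp add: w_def)
    have "\<exists>q\<in>P. Qop P f w $ i - h < (q *v w + f q) $ i"
    proof -
      have "Qop P f w $ i - h < (SUP q\<in>P. (q *v w + f q) $ i)" using h Qcomp[of w i] by linarith
      moreover have "bdd_above ((\<lambda>q. (q *v w + f q) $ i) ` P)" by (rule Qfin[rule_format])
      ultimately show ?thesis using less_cSUP_iff[OF Pne, of "\<lambda>q. (q *v w + f q) $ i"] by blast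
    qed
    then obtain q where q: "q \<in> P" "Qop P f w $ i - h < (q *v w + f q) $ i" by blast
    have st: "w$i + h * (q *v w + f q)$i - (M * (M * R + Cf) / 2) * h^2 \<le> Sq f q h w $ i"
      by (rule Sq_taylor[OF q(1) _ wR]) (use h in simp)
    have "h * (Qop P f w $ i - h) \<le> h * (q *v w + f q) $ i" using q(2) h by (intro mult_left_mono) auto
    then have m: "h * Qop P f w $ i \<le> h * (q *v w + f q) $ i + h^2"
      by (simp add: right_diff_distrib power2_eq_square)
    have Dh: "D * h^2 = (M * (M * R) / 2) * h^2 + (M * (M * R + Cf) / 2) * h^2 + h^2"
      by (simp add: D_def distrib_right)
    have c1: "v (s + h) $ i \<le> Sq f q h w $ i + D * h^2"
      using tay st m Dh by linarith
    have c2: "Sq f q h w $ i \<le> Eop P f h w $ i" by (rule E_upper[OF q(1)]) (use h in simp)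
    have c3: "Eop P f h w $ i \<le> Eop P f h X $ i + real k * D * h^2"
      by (rule E_mono) (use h Suc.hyps in \<open>simp_all add: w_def X_def s_def\<close>)
    have c4: "real k * D * h^2 + D * h^2 = real (Suc k) * D * h^2" by (simp add: algebra_simps)
    have "v (s + h) $ i \<le> Eop P f h X $ i + real (Suc k) * D * h^2"
      using c1 c2 c3 c4 by linarith
    then show "v (real (Suc k) * h) $ i \<le> ((Eop P f h) ^^ Suc k) u0 $ i + real (Suc k) * D * h^2"
      by (simp add: s_def X_def algebra_simps)
  qed
qed

lemma nisio_eq:
  assumes sol: "classical_solution P f u0 v" and t: "0 \<le> t"
  shows "nisio P f t u0 = v t"
proof -
  have comp: "nisio P f t u0 $ i = (SUP \<pi>\<in>partitions t. Epi P f \<pi> u0 $ i)" for i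
    by (simp add: nisio_def vSup_def)
  have pne: "{0, t} \<in> partitions t" using t by (auto simp: partitions_def)
  then have Pne': "partitions t \<noteq> {}" by blast
  have bdd: "bdd_above ((\<lambda>\<pi>. Epi P f \<pi> u0 $ i) ` partitions t)" for i
    by (rule bdd_aboveI2, rule Epi_upper[OF sol])
  have "nisio P f t u0 $ i = v t $ i" for i
  proof (rule antisym)
    show "nisio P f t u0 $ i \<le> v t $ i" unfolding comp by (rule cSUP_least[OF Pne' Epi_upper[OF sol]])
    show "v t $ i \<le> nisio P f t u0 $ i"
    proof (cases "t = 0")
      case True
      have "{0} \<in> partitions t" using True by (simp add: partitions_def)
      then have "Epi P f {0} u0 $ i \<le> nisio P f t u0 $ i" unfolding comp by (rule cSUP_upper[OF _ bdd])
      then show ?thesis using True sol_d(1)[OF sol] by (simp add: Epi_def E_zero)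
    next
      case False
      then have tp: "0 < t" using t by simp
      define R where "R = (\<Sum>j\<in>UNIV. \<bar>u0$j\<bar>)"
      have R: "\<forall>j. \<bar>u0$j\<bar> \<le> R" unfolding R_def by (auto intro: member_le_sum)
      define D where "D = M * (M * R) / 2 + M * (M * R + Cf) / 2 + 1"
      have R0: "0 \<le> R" unfolding R_def by (simp add: sum_nonneg)
      have D0: "0 \<le> D" unfolding D_def using M_nonneg Cf_nonneg R0 by simp
      show ?thesis
      proof (rule ccontr)
        assume "\<not> v t $ i \<le> nisio P f t u0 $ i"
        then have del: "0 < v t $ i - nisio P f t u0 $ i" by simp
        obtain n :: nat where n: "D * t^2 / (v t $ i - nisio P f t u0 $ i) < n" using reals_Archimedean2 by blast
        have n1: "1 \<le> n"
        proof -
          have "0 \<le> D * t^2 / (v t $ i - nisio P f t u0 $ i)" using D0 del by simp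
          then show ?thesis using n by (cases n) auto
        qed
        have np: "0 < real n" using n1 by simp
        have est: "v (real n * (t / n)) $ i \<le> ((Eop P f (t / n)) ^^ n) u0 $ i + real n * D * (t / n)^2"
          using lower_est[OF sol R, of "t / n" n] tp np by (simp add: D_def)
        have "real n * (t / n) = t" using np by simp
        moreover have "real n * D * (t / n)^2 = D * t^2 / n" using np by (simp add: power2_eq_square field_simps)
        ultimately have est2: "v t $ i \<le> ((Eop P f (t / n)) ^^ n) u0 $ i + D * t^2 / n" using est by simp
        have "((Eop P f (t / n)) ^^ n) u0 $ i \<le> nisio P f t u0 $ i"
          using Epi_uniform[OF tp n1] cSUP_upper[OF _ bdd] unfolding comp by metis
        moreover have "D * t^2 / n < v t $ i - nisio P f t u0 $ i"
        proof -
          have "D * t^2 < real n * (v t $ i - nisio P f t u0 $ i)" using n del by (simp add: divide_less_eq)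
          then show ?thesis using np by (simp add: divide_less_eq mult.commute)
        qed
        ultimately show False using est2 by simp
      qed
    qed
  qed
  then show ?thesis by (simp add: vec_eq_iff)
qed

end

theorem mainTheorem12:
  fixes P :: "(real^'n^'n) set" and f :: "real^'n^'n \<Rightarrow> real^'n" and q0 :: "real^'n^'n"
    and u0 :: "real^'n"
  assumes QP: "\<forall>q\<in>P. Q_matrix q"
    and q0: "q0 \<in> P" "f q0 = 0"
    and fsup: "\<forall>q\<in>P. \<forall>i. f q $ i \<le> 0"
    and Qfin: "\<forall>u i. bdd_above ((\<lambda>q. (q *v u + f q) $ i) ` P)"
    and fbdd: "\<exists>C. \<forall>q\<in>P. (\<forall>i. \<bar>f q $ i\<bar> \<le> C)"
  shows "classical_solution P f u0 (\<lambda>t. nisio P f t u0)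
     \<and> (\<forall>v. classical_solution P f u0 v \<longrightarrow> (\<forall>t\<ge>0. v t = nisio P f t u0))"
proof -
  interpret nis P f q0 using assms by unfold_locales auto
  obtain u where u: "classical_solution P f u0 u" using existence by blast
  have eq: "\<And>t. 0 \<le> t \<Longrightarrow> nisio P f t u0 = u t" by (rule nisio_eq[OF u])
  from u obtain v' where c: "continuous_on {0..} v'"
    and d: "\<forall>t\<ge>0. (u has_vector_derivative v' t) (at t within {0..}) \<and> v' t = Qop P f (u t)"
    and u0: "u 0 = u0" unfolding classical_solution_def by blast
  have "classical_solution P f u0 (\<lambda>t. nisio P f t u0)"
    unfolding classical_solution_def
  proof (intro conjI exI[of _ v'] allI impI)
    show "continuous_on {0..} v'" by (rule c)
    fix t :: real assume t: "0 \<le> t"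
    show "((\<lambda>t. nisio P f t u0) has_vector_derivative v' t) (at t within {0..})"
      by (rule has_vector_derivative_transform[where f=u]) (use t eq d in auto)
    show "v' t = Qop P f (nisio P f t u0)" using d t eq by simp
  next
    show "nisio P f 0 u0 = u0" using eq[of 0] u0 by simp
  qed
  moreover have "\<forall>v. classical_solution P f u0 v \<longrightarrow> (\<forall>t\<ge>0. v t = nisio P f t u0)"
    using nisio_eq by auto
  ultimately show ?thesis by blast
qed


end
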